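(* Let $N_b, N_g, L, M, P$ be positive integers. For $\ell=1,\dots,L$ let $\mathbf{L}_\ell\in\mathbb{R}^{2N_b\times 2N_b}$ be symmetric, $\mathbf{a}_\ell\in\mathbb{R}^{2N_g}$, $\mathbf{b}_\ell\in\mathbb{R}^{P}$; for $m=1,\dots,M$ let $\mathbf{M}_m\in\mathbb{R}^{2N_b\times 2N_b}$ be symmetric, $\mathbf{d}_m\in\mathbb{R}^P$, $f_m\in\mathbb{R}$; and let $\mathbf{a}_0\in\mathbb{R}^{2N_g}$. For a parameter $\boldsymbol{\theta}\in\mathbb{R}^P$ consider the parametric quadratically constrained quadratic program $$\min_{\mathbf{v}\in\mathbb{R}^{2N_b},\,\mathbf{x}_g\in\mathbb{R}^{2N_g}}\ \mathbf{a}_0^\top\mathbf{x}_g\quad\text{s.t.}\quad \mathbf{v}^\top\mathbf{L}_\ell\mathbf{v}=\mathbf{a}_\ell^\top\mathbf{x}_g+\mathbf{b}_\ell^\top\boldsymbol{\theta}\ (\ell=1,\dots,L),\qquad \mathbf{v}^\top\mathbf{M}_m\mathbf{v}\le \mathbf{d}_m^\top\boldsymbol{\theta}+f_m\ (m=1,\dots,M),$$ with multipliers $\lambda_\ell$ for the equality constraints and $\mu_m$ for the inequality constraints. Let $(\mathbf{v},\mathbf{x}_g,\boldsymbol{\lambda},\boldsymbol{\mu})$ be a tuple of (locally) optimal primal/dual variables for a given $\boldsymbol{\theta}$, satisfying the first-order optimality conditions: primal feasibility, $\mathbf{Z}\mathbf{v}=\mathbf{0}$ with $\mathbf{Z}:=\sum_{\ell=1}^L\lambda_\ell\mathbf{L}_\ell+\sum_{m=1}^M\mu_m\mathbf{M}_m$,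 $\mathbf{a}_0=\sum_{\ell=1}^L\lambda_\ell\mathbf{a}_\ell$, $\mu_m g_m=0$ and $\mu_m\ge 0$ for all $m$, where $g_m:=\mathbf{v}^\top\mathbf{M}_m\mathbf{v}-\mathbf{d}_m^\top\boldsymbol{\theta}-f_m$. Assume: (i) (strict complementarity) for every $m$, $g_m=0$ if and only if $\mu_m>0$; (ii) (second-order condition) with $\mathcal{A}:=\{m: g_m=0\}$, $\nabla_{\mathbf{x}}h_\ell:=\begin{bmatrix}2\mathbf{L}_\ell\mathbf{v}\\-\mathbf{a}_\ell\end{bmatrix}$, $\nabla_{\mathbf{x}}g_m:=\begin{bmatrix}2\mathbf{M}_m\mathbf{v}\\\mathbf{0}\end{bmatrix}$, $\nabla^2_{\mathbf{x}\mathbf{x}}\mathcal{L}:=\begin{bmatrix}\mathbf{Z}&\mathbf{0}\\\mathbf{0}&\mathbf{0}\end{bmatrix}$ and $\mathcal{Z}:=\{\mathbf{z}\in\mathbb{R}^{2N_b+2N_g}:\mathbf{z}^\top\nabla_{\mathbf{x}}h_\ell=0\ \forall\ell,\ \mathbf{z}^\top\nabla_{\mathbf{x}}g_m=0\ \forall m\in\mathcal{A}\}$, it holds that $\mathbf{z}^\top\nabla^2_{\mathbf{x}\mathbf{x}}\mathcal{L}\,\mathbf{z}>0$ for all $\mathbf{z}\in\mathcal{Z}\setminus\{\mathbf{0}\}$. Define the square matrix of size $2N_b+2N_g+L+M$ $$\mathbf{S}:=\begin{bmatrix}\mathbf{Z}&\mathbf{0}&\mathbf{L}_\lambda&\mathbf{M}_\mu\\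 \mathbf{0}&\mathbf{0}&\mathbf{A}^\top&\mathbf{0}\\ 2\mathbf{L}_\lambda^\top&-\mathbf{A}&\mathbf{0}&\mathbf{0}\\ 2\mathcal{D}(\boldsymbol{\mu})\mathbf{M}_\mu^\top&\mathbf{0}&\mathbf{0}&\mathcal{D}(\mathbf{g})\end{bmatrix},$$ where $\mathbf{L}_\lambda:=\sum_{\ell=1}^L\mathbf{L}_\ell\mathbf{v}\mathbf{e}_\ell^\top\in\mathbb{R}^{2N_b\times L}$, $\mathbf{M}_\mu:=\sum_{m=1}^M\mathbf{M}_m\mathbf{v}\mathbf{e}_m^\top\in\mathbb{R}^{2N_b\times M}$, $\mathbf{A}\in\mathbb{R}^{L\times 2N_g}$ is the matrix whose $\ell$-th row is $\mathbf{a}_\ell^\top$, $\mathbf{g}:=(g_1,\dots,g_M)$, and $\mathcal{D}(\cdot)$ denotes the diagonal matrix with the given vector on its diagonal. Then for every $\mathbf{n}\in\operatorname{null}(\mathbf{S})$, the entries $n_i$ for $i=1,\dots,2(N_b+N_g)$ are zero.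
   Context: This problem is an abstraction of the AC optimal power flow: $\mathbf{v}$ stacks real and imaginary parts of bus voltages, $\mathbf{x}_g$ stacks generator active/reactive power injections, and $\boldsymbol{\theta}$ stacks inflexible load demands. $\mathbf{e}_k$ denotes the $k$-th canonical basis vector of appropriate dimension. The conclusion means that the first $2(N_b+N_g)$ coordinates (those corresponding to $(\mathbf{v},\mathbf{x}_g)$) of any vector in the null space of $\mathbf{S}$ vanish, so that the primal sensitivities obtained from the linear system $\mathbf{S}\boldsymbol{\gamma}=\mathbf{u}$ are uniquely determined even when $\mathbf{S}$ is singular. *)

theory Defs
  imports Complex_Main "Jordan_Normal_Form.Matrix" "Jordan_Normal_Form.Matrix_Kernel"
begin

(* Indices are 0-based: l < L, m < M, instead of 1..L, 1..M. *)

definition gcon :: "(nat \<Rightarrow> real mat) \<Rightarrow> (nat \<Rightarrow> real vec) \<Rightarrow> (nat \<Rightarrow> real)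
    \<Rightarrow> real vec \<Rightarrow> real vec \<Rightarrow> nat \<Rightarrow> real" where
  "gcon Mm d f v theta m = v \<bullet> (Mm m *\<^sub>v v) - d m \<bullet> theta - f m"

definition feasible :: "nat \<Rightarrow> nat \<Rightarrow> (nat \<Rightarrow> real mat) \<Rightarrow> (nat \<Rightarrow> real vec) \<Rightarrow> (nat \<Rightarrow> real vec)
    \<Rightarrow> (nat \<Rightarrow> real mat) \<Rightarrow> (nat \<Rightarrow> real vec) \<Rightarrow> (nat \<Rightarrow> real)
    \<Rightarrow> real vec \<Rightarrow> real vec \<Rightarrow> real vec \<Rightarrow> bool" where
  "feasible L M Lm a b Mm d f theta v xg \<longleftrightarrow>
     (\<forall>l<L. v \<bullet> (Lm l *\<^sub>v v) = a l \<bullet> xg + b l \<bullet> theta) \<and>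
     (\<forall>m<M. v \<bullet> (Mm m *\<^sub>v v) \<le> d m \<bullet> theta + f m)"

definition Zmat :: "nat \<Rightarrow> nat \<Rightarrow> nat \<Rightarrow> (nat \<Rightarrow> real mat) \<Rightarrow> (nat \<Rightarrow> real mat)
    \<Rightarrow> real vec \<Rightarrow> real vec \<Rightarrow> real mat" where
  "Zmat n L M Lm Mm lam mu = mat n n (\<lambda>(i,j).
      (\<Sum>l<L. lam $ l * Lm l $$ (i,j)) + (\<Sum>m<M. mu $ m * Mm m $$ (i,j)))"

definition colmat :: "nat \<Rightarrow> nat \<Rightarrow> (nat \<Rightarrow> real mat) \<Rightarrow> real vec \<Rightarrow> real mat" where
  "colmat n K Q v = mat n K (\<lambda>(i,k). (Q k *\<^sub>v v) $ i)"

definition rowmat :: "nat \<Rightarrow> nat \<Rightarrow> (nat \<Rightarrow> real vec) \<Rightarrow> real mat" where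
  "rowmat L n a = mat L n (\<lambda>(l,k). a l $ k)"

definition Dmat :: "real vec \<Rightarrow> real mat" where
  "Dmat x = mat (dim_vec x) (dim_vec x) (\<lambda>(i,j). if i = j then x $ i else 0)"

definition Smat :: "nat \<Rightarrow> nat \<Rightarrow> nat \<Rightarrow> nat \<Rightarrow> (nat \<Rightarrow> real mat) \<Rightarrow> (nat \<Rightarrow> real vec)
    \<Rightarrow> (nat \<Rightarrow> real mat) \<Rightarrow> (nat \<Rightarrow> real vec) \<Rightarrow> (nat \<Rightarrow> real)
    \<Rightarrow> real vec \<Rightarrow> real vec \<Rightarrow> real vec \<Rightarrow> real vec \<Rightarrow> real mat" where
  "Smat Nb Ng L M Lm a Mm d f theta v lam mu =
    (let n1 = 2 * Nb; n2 = 2 * Ng;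
         Z = Zmat n1 L M Lm Mm lam mu;
         Ll = colmat n1 L Lm v;
         Mu = colmat n1 M Mm v;
         A = rowmat L n2 a;
         g = vec M (gcon Mm d f v theta)
     in four_block_mat
          (four_block_mat Z (0\<^sub>m n1 n2) (0\<^sub>m n2 n1) (0\<^sub>m n2 n2))
          (four_block_mat Ll Mu (transpose_mat A) (0\<^sub>m n2 M))
          (four_block_mat (2 \<cdot>\<^sub>m transpose_mat Ll) (- A)
                          (2 \<cdot>\<^sub>m (Dmat mu * transpose_mat Mu)) (0\<^sub>m M n2))
          (four_block_mat (0\<^sub>m L L) (0\<^sub>m L M) (0\<^sub>m M L) (Dmat g)))"

end

theory Submission
  imports Defs
begin


lemma fb_mult:
  fixes A B C D :: "'a::comm_ring_1 mat"
  assumes A: "A \<in> carrier_mat nr1 nc1" and B: "B \<in> carrier_mat nr1 nc2"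
    and C: "C \<in> carrier_mat nr2 nc1" and D: "D \<in> carrier_mat nr2 nc2"
    and x: "x \<in> carrier_vec nc1" and y: "y \<in> carrier_vec nc2"
  shows "four_block_mat A B C D *\<^sub>v (x @\<^sub>v y) = (A *\<^sub>v x + B *\<^sub>v y) @\<^sub>v (C *\<^sub>v x + D *\<^sub>v y)"
proof (rule eq_vecI)
  show "dim_vec (four_block_mat A B C D *\<^sub>v (x @\<^sub>v y)) = dim_vec ((A *\<^sub>v x + B *\<^sub>v y) @\<^sub>v (C *\<^sub>v x + D *\<^sub>v y))"
    using A B C D by simp
  fix i assume "i < dim_vec ((A *\<^sub>v x + B *\<^sub>v y) @\<^sub>v (C *\<^sub>v x + D *\<^sub>v y))"
  then have i: "i < nr1 + nr2" using A B C D by simp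
  show "(four_block_mat A B C D *\<^sub>v (x @\<^sub>v y)) $ i = ((A *\<^sub>v x + B *\<^sub>v y) @\<^sub>v (C *\<^sub>v x + D *\<^sub>v y)) $ i"
  proof (cases "i < nr1")
    case True
    then show ?thesis using A B C D x y i
      by (simp add: row_four_block_mat(1)[OF A B C D] scalar_prod_append[of _ nc1 _ nc2])
  next
    case False
    have r: "row C (i-nr1) \<in> carrier_vec nc1" "row D (i-nr1) \<in> carrier_vec nc2" using C D by auto
    then show ?thesis using A B C D x y i False
      by (simp add: row_four_block_mat(2)[OF A B C D] scalar_prod_append[OF r x y])
  qed
qed

lemma Dmat_mult: assumes "w \<in> carrier_vec (dim_vec x)" "i < dim_vec x"
  shows "(Dmat x *\<^sub>v w) $ i = x $ i * w $ i"
proof -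
  have "(Dmat x *\<^sub>v w) $ i = (\<Sum>j<dim_vec x. (if i = j then x $ i else 0) * w $ j)"
    using assms unfolding Dmat_def by (simp add: scalar_prod_def row_def lessThan_atLeast0)
  also have "\<dots> = (\<Sum>j<dim_vec x. if j = i then x $ i * w $ i else 0)"
    by (rule sum.cong) auto
  also have "\<dots> = x $ i * w $ i"
    using assms by simp
  finally show ?thesis .
qed

lemma zmv: "(w::real vec) \<in> carrier_vec b \<Longrightarrow> 0\<^sub>m a b *\<^sub>v w = 0\<^sub>v a"
  by (intro eq_vecI) (auto simp: scalar_prod_def)

lemma smv: "i < dim_row B \<Longrightarrow> dim_vec w = dim_col B \<Longrightarrow> ((k \<cdot>\<^sub>m B) *\<^sub>v (w::real vec)) $ i = k * ((B *\<^sub>v w) $ i)"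
  by (auto simp: scalar_prod_def sum_distrib_left ac_simps row_def intro!: sum.cong)

theorem theorem1:
  fixes Nb Ng L M P :: nat
    and Lm Mm :: "nat \<Rightarrow> real mat"
    and a b d :: "nat \<Rightarrow> real vec"
    and f :: "nat \<Rightarrow> real"
    and a0 theta v xg lam mu :: "real vec"
  assumes pos: "0 < Nb" "0 < Ng" "0 < L" "0 < M" "0 < P"
    and Lm_dim: "\<And>l. l < L \<Longrightarrow> Lm l \<in> carrier_mat (2*Nb) (2*Nb)"
    and Lm_sym: "\<And>l. l < L \<Longrightarrow> transpose_mat (Lm l) = Lm l"
    and a_dim: "\<And>l. l < L \<Longrightarrow> a l \<in> carrier_vec (2*Ng)"
    and b_dim: "\<And>l. l < L \<Longrightarrow> b l \<in> carrier_vec P"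
    and Mm_dim: "\<And>m. m < M \<Longrightarrow> Mm m \<in> carrier_mat (2*Nb) (2*Nb)"
    and Mm_sym: "\<And>m. m < M \<Longrightarrow> transpose_mat (Mm m) = Mm m"
    and d_dim: "\<And>m. m < M \<Longrightarrow> d m \<in> carrier_vec P"
    and a0_dim: "a0 \<in> carrier_vec (2*Ng)"
    and theta_dim: "theta \<in> carrier_vec P"
    and v_dim: "v \<in> carrier_vec (2*Nb)"
    and xg_dim: "xg \<in> carrier_vec (2*Ng)"
    and lam_dim: "lam \<in> carrier_vec L"
    and mu_dim: "mu \<in> carrier_vec M"
    \<comment> \<open>(local) optimality of the primal point\<close>
    and feas: "feasible L M Lm a b Mm d f theta v xg"
    and locopt: "\<exists>\<epsilon>>0. \<forall>v' xg'. v' \<in> carrier_vec (2*Nb) \<longrightarrow> xg' \<in> carrier_vec (2*Ng) \<longrightarrow>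
                   feasible L M Lm a b Mm d f theta v' xg' \<longrightarrow>
                   (v' - v) \<bullet> (v' - v) + (xg' - xg) \<bullet> (xg' - xg) < \<epsilon> \<longrightarrow>
                   a0 \<bullet> xg \<le> a0 \<bullet> xg'"
    \<comment> \<open>first-order (KKT) conditions\<close>
    and stat_v: "Zmat (2*Nb) L M Lm Mm lam mu *\<^sub>v v = 0\<^sub>v (2*Nb)"
    and stat_x: "a0 = finsum_vec TYPE(real) (2*Ng) (\<lambda>l. lam $ l \<cdot>\<^sub>v a l) {..<L}"
    and compl: "\<And>m. m < M \<Longrightarrow> mu $ m * gcon Mm d f v theta m = 0"
    and mu_nonneg: "\<And>m. m < M \<Longrightarrow> mu $ m \<ge> 0"
    \<comment> \<open>(i) strict complementarity\<close>
    and strict: "\<And>m. m < M \<Longrightarrow> (gcon Mm d f v theta m = 0 \<longleftrightarrow> mu $ m > 0)"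
    \<comment> \<open>(ii) second-order sufficient condition\<close>
    and soc: "\<And>z. z \<in> carrier_vec (2*Nb + 2*Ng) \<Longrightarrow> z \<noteq> 0\<^sub>v (2*Nb + 2*Ng) \<Longrightarrow>
              (\<forall>l<L. z \<bullet> ((2 \<cdot>\<^sub>v (Lm l *\<^sub>v v)) @\<^sub>v (- a l)) = 0) \<Longrightarrow>
              (\<forall>m<M. gcon Mm d f v theta m = 0 \<longrightarrow>
                 z \<bullet> ((2 \<cdot>\<^sub>v (Mm m *\<^sub>v v)) @\<^sub>v 0\<^sub>v (2*Ng)) = 0) \<Longrightarrow>
              z \<bullet> (four_block_mat (Zmat (2*Nb) L M Lm Mm lam mu) (0\<^sub>m (2*Nb) (2*Ng))
                                   (0\<^sub>m (2*Ng) (2*Nb)) (0\<^sub>m (2*Ng) (2*Ng)) *\<^sub>v z) > 0"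
  shows "\<forall>n \<in> mat_kernel (Smat Nb Ng L M Lm a Mm d f theta v lam mu).
           \<forall>i < 2*(Nb+Ng). n $ i = 0"
  proof (intro ballI allI impI)
  fix n i assume nk: "n \<in> mat_kernel (Smat Nb Ng L M Lm a Mm d f theta v lam mu)"
    and i: "i < 2*(Nb+Ng)"
  define N1 where "N1 = 2*Nb"
  define N2 where "N2 = 2*Ng"
  define Z where "Z = Zmat N1 L M Lm Mm lam mu"
  define Ll where "Ll = colmat N1 L Lm v"
  define Mu where "Mu = colmat N1 M Mm v"
  define A where "A = rowmat L N2 a"
  define g where "g = vec M (gcon Mm d f v theta)"
  define TL where "TL = four_block_mat Z (0\<^sub>m N1 N2) (0\<^sub>m N2 N1) (0\<^sub>m N2 N2)"
  define TR where "TR = four_block_mat Ll Mu (transpose_mat A) (0\<^sub>m N2 M)"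
  define BL where "BL = four_block_mat (2 \<cdot>\<^sub>m transpose_mat Ll) (- A)
                          (2 \<cdot>\<^sub>m (Dmat mu * transpose_mat Mu)) (0\<^sub>m M N2)"
  define BR where "BR = four_block_mat (0\<^sub>m L L) (0\<^sub>m L M) (0\<^sub>m M L) (Dmat g)"
  have S: "Smat Nb Ng L M Lm a Mm d f theta v lam mu = four_block_mat TL TR BL BR"
    unfolding Smat_def Let_def TL_def TR_def BL_def BR_def Z_def Ll_def Mu_def A_def g_def N1_def N2_def
    by simp
  have Zc: "Z \<in> carrier_mat N1 N1" unfolding Z_def Zmat_def by simp
  have Llc: "Ll \<in> carrier_mat N1 L" unfolding Ll_def colmat_def by simp
  have Muc: "Mu \<in> carrier_mat N1 M" unfolding Mu_def colmat_def by simp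
  have Ac: "A \<in> carrier_mat L N2" unfolding A_def rowmat_def by simp
  have gc: "g \<in> carrier_vec M" unfolding g_def by simp
  have Dmu: "Dmat mu \<in> carrier_mat M M" using mu_dim unfolding Dmat_def by auto
  have Dg: "Dmat g \<in> carrier_mat M M" using gc unfolding Dmat_def by auto
  have TLc: "TL \<in> carrier_mat (N1+N2) (N1+N2)" unfolding TL_def using Zc by simp
  have TRc: "TR \<in> carrier_mat (N1+N2) (L+M)" unfolding TR_def using Llc by simp
  have BLc: "BL \<in> carrier_mat (L+M) (N1+N2)" unfolding BL_def using Llc by simp
  have BRc: "BR \<in> carrier_mat (L+M) (L+M)" unfolding BR_def using Dg by simp
  have nc: "n \<in> carrier_vec ((N1+N2)+(L+M))" and Sn: "four_block_mat TL TR BL BR *\<^sub>v n = 0\<^sub>v ((N1+N2)+(L+M))"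
    using nk TLc TRc BLc BRc unfolding mat_kernel_def S by auto
  define x where "x = vec_first n (N1+N2)"
  define y where "y = vec_last n (L+M)"
  have nxy: "n = x @\<^sub>v y" unfolding x_def y_def using nc by simp
  define n1 where "n1 = vec_first x N1"
  define n2 where "n2 = vec_last x N2"
  define n3 where "n3 = vec_first y L"
  define n4 where "n4 = vec_last y M"
  have xc: "x \<in> carrier_vec (N1+N2)" unfolding x_def by simp
  have yc: "y \<in> carrier_vec (L+M)" unfolding y_def by simp
  have x12: "x = n1 @\<^sub>v n2" unfolding n1_def n2_def using xc by simp
  have y34: "y = n3 @\<^sub>v n4" unfolding n3_def n4_def using yc by simp
  have n1c: "n1 \<in> carrier_vec N1" and n2c: "n2 \<in> carrier_vec N2"
    and n3c: "n3 \<in> carrier_vec L" and n4c: "n4 \<in> carrier_vec M"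
    unfolding n1_def n2_def n3_def n4_def by auto
  have c1: "(2 \<cdot>\<^sub>m transpose_mat Ll) *\<^sub>v n1 + (- A) *\<^sub>v n2 \<in> carrier_vec L"
    by (intro add_carrier_vec mult_mat_vec_carrier[of _ L N1] mult_mat_vec_carrier[of _ L N2]) (use Llc Ac n1c n2c in auto)
  have c2: "(2 \<cdot>\<^sub>m (Dmat mu * transpose_mat Mu)) *\<^sub>v n1 \<in> carrier_vec M"
    using Dmu Muc n1c by (intro mult_mat_vec_carrier[of _ M N1] smult_carrier_mat mult_carrier_mat[of _ M M] transpose_carrier_mat) auto
  have zsplit: "\<And>p q. (0\<^sub>v (p+q) :: real vec) = 0\<^sub>v p @\<^sub>v 0\<^sub>v q" by (intro eq_vecI) auto
  have "four_block_mat TL TR BL BR *\<^sub>v n = (TL *\<^sub>v x + TR *\<^sub>v y) @\<^sub>v (BL *\<^sub>v x + BR *\<^sub>v y)"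
    unfolding nxy by (rule fb_mult[OF TLc TRc BLc BRc xc yc])
  with Sn have "(TL *\<^sub>v x + TR *\<^sub>v y) @\<^sub>v (BL *\<^sub>v x + BR *\<^sub>v y) = 0\<^sub>v (N1+N2) @\<^sub>v 0\<^sub>v (L+M)"
    by (simp add: zsplit)
  have e12: "TL *\<^sub>v x + TR *\<^sub>v y = 0\<^sub>v (N1+N2) \<and> BL *\<^sub>v x + BR *\<^sub>v y = 0\<^sub>v (L+M)"
    by (rule iffD1[OF append_vec_eq[of _ "N1+N2"]]) (use TLc TRc xc yc \<open>(TL *\<^sub>v x + TR *\<^sub>v y) @\<^sub>v (BL *\<^sub>v x + BR *\<^sub>v y) = 0\<^sub>v (N1+N2) @\<^sub>v 0\<^sub>v (L+M)\<close> in auto)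
  have tlx: "TL *\<^sub>v x = (Z *\<^sub>v n1) @\<^sub>v 0\<^sub>v N2"
  proof -
    have "TL *\<^sub>v x = (Z *\<^sub>v n1 + 0\<^sub>m N1 N2 *\<^sub>v n2) @\<^sub>v (0\<^sub>m N2 N1 *\<^sub>v n1 + 0\<^sub>m N2 N2 *\<^sub>v n2)"
      unfolding TL_def x12 by (rule fb_mult) (use Zc n1c n2c in auto)
    then show ?thesis using Zc n1c n2c by (simp add: zmv)
  qed
  have tr_y: "TR *\<^sub>v y = (Ll *\<^sub>v n3 + Mu *\<^sub>v n4) @\<^sub>v (transpose_mat A *\<^sub>v n3)"
  proof -
    have "TR *\<^sub>v y = (Ll *\<^sub>v n3 + Mu *\<^sub>v n4) @\<^sub>v (transpose_mat A *\<^sub>v n3 + 0\<^sub>m N2 M *\<^sub>v n4)"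
      unfolding TR_def y34 by (rule fb_mult) (use Llc Muc Ac n3c n4c in auto)
    then show ?thesis using Ac n3c n4c by (simp add: zmv)
  qed
  have blx: "BL *\<^sub>v x = ((2 \<cdot>\<^sub>m transpose_mat Ll) *\<^sub>v n1 + (- A) *\<^sub>v n2) @\<^sub>v ((2 \<cdot>\<^sub>m (Dmat mu * transpose_mat Mu)) *\<^sub>v n1)"
  proof -
    have "BL *\<^sub>v x = ((2 \<cdot>\<^sub>m transpose_mat Ll) *\<^sub>v n1 + (- A) *\<^sub>v n2) @\<^sub>v ((2 \<cdot>\<^sub>m (Dmat mu * transpose_mat Mu)) *\<^sub>v n1 + 0\<^sub>m M N2 *\<^sub>v n2)"
      unfolding BL_def x12 by (rule fb_mult) (use Llc Muc Ac Dmu n1c n2c in auto)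
    moreover have "(2 \<cdot>\<^sub>m (Dmat mu * transpose_mat Mu)) *\<^sub>v n1 \<in> carrier_vec M"
      using Dmu Muc n1c by (intro mult_mat_vec_carrier[of _ M N1] smult_carrier_mat mult_carrier_mat[of _ M M] transpose_carrier_mat) auto
    ultimately show ?thesis using Dmu Muc n1c n2c by (simp add: zmv)
  qed
  have bry: "BR *\<^sub>v y = 0\<^sub>v L @\<^sub>v (Dmat g *\<^sub>v n4)"
  proof -
    have "BR *\<^sub>v y = (0\<^sub>m L L *\<^sub>v n3 + 0\<^sub>m L M *\<^sub>v n4) @\<^sub>v (0\<^sub>m M L *\<^sub>v n3 + Dmat g *\<^sub>v n4)"
      unfolding BR_def y34 by (rule fb_mult) (use Dg n3c n4c in auto)
    then show ?thesis using Dg n3c n4c by (simp add: zmv)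
  qed
  have "(Z *\<^sub>v n1 + (Ll *\<^sub>v n3 + Mu *\<^sub>v n4)) @\<^sub>v (transpose_mat A *\<^sub>v n3) = 0\<^sub>v N1 @\<^sub>v 0\<^sub>v N2"
    using e12 unfolding tlx tr_y zsplit
    by (subst (asm) append_vec_add[of _ N1 _ _ N2]) (use Zc Llc Muc Ac n3c n4c n1c in auto)
  then have "Z *\<^sub>v n1 + (Ll *\<^sub>v n3 + Mu *\<^sub>v n4) = 0\<^sub>v N1 \<and> transpose_mat A *\<^sub>v n3 = 0\<^sub>v N2"
    by (intro iffD1[OF append_vec_eq[of _ N1]]) (use Zc Llc Muc n1c n3c n4c in auto)
  then have E1: "Z *\<^sub>v n1 + (Ll *\<^sub>v n3 + Mu *\<^sub>v n4) = 0\<^sub>v N1" and E2: "transpose_mat A *\<^sub>v n3 = 0\<^sub>v N2"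
    by auto
  have "((2 \<cdot>\<^sub>m transpose_mat Ll) *\<^sub>v n1 + (- A) *\<^sub>v n2 + 0\<^sub>v L) @\<^sub>v ((2 \<cdot>\<^sub>m (Dmat mu * transpose_mat Mu)) *\<^sub>v n1 + Dmat g *\<^sub>v n4) = 0\<^sub>v L @\<^sub>v 0\<^sub>v M"
    using e12 unfolding blx bry zsplit
    by (subst (asm) append_vec_add[of _ L _ _ M]) (use Llc Muc Ac Dmu Dg n1c n2c n4c c1 c2 in auto)
  then have "(2 \<cdot>\<^sub>m transpose_mat Ll) *\<^sub>v n1 + (- A) *\<^sub>v n2 + 0\<^sub>v L = 0\<^sub>v L \<and> (2 \<cdot>\<^sub>m (Dmat mu * transpose_mat Mu)) *\<^sub>v n1 + Dmat g *\<^sub>v n4 = 0\<^sub>v M"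
    by (intro iffD1[OF append_vec_eq[of _ L]]) (use Llc Ac n1c n2c c1 c2 in auto)
  then have E3: "(2 \<cdot>\<^sub>m transpose_mat Ll) *\<^sub>v n1 + (- A) *\<^sub>v n2 + 0\<^sub>v L = 0\<^sub>v L"
    and E4: "(2 \<cdot>\<^sub>m (Dmat mu * transpose_mat Mu)) *\<^sub>v n1 + Dmat g *\<^sub>v n4 = 0\<^sub>v M"
    by auto
  have colL: "col Ll l = Lm l *\<^sub>v v" if "l < L" for l
    using that Lm_dim[OF that] by (intro eq_vecI) (auto simp: Ll_def colmat_def N1_def)
  have colM: "col Mu m = Mm m *\<^sub>v v" if "m < M" for m
    using that Mm_dim[OF that] by (intro eq_vecI) (auto simp: Mu_def colmat_def N1_def)
  have rowA: "row A l = a l" if "l < L" for l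
    using that a_dim[OF that] by (intro eq_vecI) (auto simp: A_def rowmat_def N2_def)
  have Lvc: "Lm l *\<^sub>v v \<in> carrier_vec N1" if "l < L" for l
    using Lm_dim[OF that] v_dim by (auto simp: N1_def)
  have Mvc: "Mm m *\<^sub>v v \<in> carrier_vec N1" if "m < M" for m
    using Mm_dim[OF that] v_dim by (auto simp: N1_def)
  have ac: "a l \<in> carrier_vec N2" if "l < L" for l
    using a_dim[OF that] by (auto simp: N2_def)
  have LlT: "(transpose_mat Ll *\<^sub>v n1) $ l = (Lm l *\<^sub>v v) \<bullet> n1" if "l < L" for l
    using that Llc colL[OF that] by simp
  have MuT: "(transpose_mat Mu *\<^sub>v n1) $ m = (Mm m *\<^sub>v v) \<bullet> n1" if "m < M" for m
    using that Muc colM[OF that] by simp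
  have E3l: "2 * ((Lm l *\<^sub>v v) \<bullet> n1) - a l \<bullet> n2 = 0" if l: "l < L" for l
  proof -
    have "(((2 \<cdot>\<^sub>m transpose_mat Ll) *\<^sub>v n1 + (- A) *\<^sub>v n2 + 0\<^sub>v L)) $ l = 0"
      using E3 l by simp
    moreover have "((2 \<cdot>\<^sub>m transpose_mat Ll) *\<^sub>v n1) $ l = 2 * ((Lm l *\<^sub>v v) \<bullet> n1)"
      using smv[of l "transpose_mat Ll" n1 2] l Llc n1c LlT[OF l] by simp
    moreover have "((- A) *\<^sub>v n2) $ l = - (a l \<bullet> n2)"
      using l Ac n2c rowA[OF l] by simp
    ultimately show ?thesis using l Llc Ac n1c n2c by simp
  qed
  have E4m: "2 * (mu $ m * ((Mm m *\<^sub>v v) \<bullet> n1)) + gcon Mm d f v theta m * n4 $ m = 0" if m: "m < M" for m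
  proof -
    have "((2 \<cdot>\<^sub>m (Dmat mu * transpose_mat Mu)) *\<^sub>v n1 + Dmat g *\<^sub>v n4) $ m = 0"
      using E4 m by simp
    moreover have "((2 \<cdot>\<^sub>m (Dmat mu * transpose_mat Mu)) *\<^sub>v n1) $ m = 2 * (mu $ m * ((Mm m *\<^sub>v v) \<bullet> n1))"
    proof -
      have "((2 \<cdot>\<^sub>m (Dmat mu * transpose_mat Mu)) *\<^sub>v n1) $ m = 2 * (((Dmat mu * transpose_mat Mu)) *\<^sub>v n1) $ m"
        using smv[of m "Dmat mu * transpose_mat Mu" n1 2] m Dmu Muc n1c by simp
      also have "(Dmat mu * transpose_mat Mu) *\<^sub>v n1 = Dmat mu *\<^sub>v (transpose_mat Mu *\<^sub>v n1)"
        using Dmu Muc n1c by (intro assoc_mult_mat_vec) auto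
      also have "(Dmat mu *\<^sub>v (transpose_mat Mu *\<^sub>v n1)) $ m = mu $ m * (transpose_mat Mu *\<^sub>v n1) $ m"
        using m mu_dim Muc n1c mult_mat_vec_carrier[of "transpose_mat Mu" M N1 n1] by (intro Dmat_mult) auto
      finally show ?thesis using MuT[OF m] by simp
    qed
    moreover have "(Dmat g *\<^sub>v n4) $ m = gcon Mm d f v theta m * n4 $ m"
      using Dmat_mult[of n4 g m] m gc n4c by (simp add: g_def)
    ultimately show ?thesis using m Dmu Muc Dg n1c n4c by simp
  qed
  have prodM: "(transpose_mat Mu *\<^sub>v n1) $ m * n4 $ m = 0" if m: "m < M" for m
  proof (cases "gcon Mm d f v theta m = 0")
    case True
    then have "mu $ m > 0" using strict[OF m] by simp
    with E4m[OF m] True have "(Mm m *\<^sub>v v) \<bullet> n1 = 0" by simp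
    then show ?thesis using MuT[OF m] by simp
  next
    case False
    then have "mu $ m = 0" using compl[OF m] by simp
    with E4m[OF m] False have "n4 $ m = 0" by simp
    then show ?thesis by simp
  qed
  have LlTv: "transpose_mat Ll *\<^sub>v n1 = (1/2) \<cdot>\<^sub>v (A *\<^sub>v n2)"
  proof (intro eq_vecI)
    fix l assume "l < dim_vec ((1/2) \<cdot>\<^sub>v (A *\<^sub>v n2))"
    then have l: "l < L" using Ac by simp
    show "(transpose_mat Ll *\<^sub>v n1) $ l = ((1/2) \<cdot>\<^sub>v (A *\<^sub>v n2)) $ l"
      using E3l[OF l] LlT[OF l] l Ac rowA[OF l] by simp
  qed (use Llc Ac in simp)
  have q1: "n1 \<bullet> (Ll *\<^sub>v n3) = 0"
  proof -
    have "n1 \<bullet> (Ll *\<^sub>v n3) = (transpose_mat Ll *\<^sub>v n1) \<bullet> n3"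
      using transpose_vec_mult_scalar[OF Llc n3c n1c] by simp
    also have "\<dots> = (1/2) * ((A *\<^sub>v n2) \<bullet> n3)" unfolding LlTv using Ac n3c by simp
    also have "(A *\<^sub>v n2) \<bullet> n3 = n3 \<bullet> (A *\<^sub>v n2)"
      using Ac n3c n2c by (intro comm_scalar_prod[of _ L]) auto
    also have "\<dots> = (transpose_mat A *\<^sub>v n3) \<bullet> n2"
      using transpose_vec_mult_scalar[OF Ac n2c n3c] by simp
    also have "\<dots> = 0" unfolding E2 using n2c by simp
    finally show ?thesis by simp
  qed
  have q2: "n1 \<bullet> (Mu *\<^sub>v n4) = 0"
  proof -
    have "n1 \<bullet> (Mu *\<^sub>v n4) = (transpose_mat Mu *\<^sub>v n1) \<bullet> n4"
      using transpose_vec_mult_scalar[OF Muc n4c n1c] by simp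
    also have "\<dots> = 0" unfolding scalar_prod_def using n4c prodM by (simp add: sum.neutral)
    finally show ?thesis .
  qed
  have q0: "n1 \<bullet> (Z *\<^sub>v n1) = 0"
  proof -
    have z0: "n1 \<bullet> (Z *\<^sub>v n1 + (Ll *\<^sub>v n3 + Mu *\<^sub>v n4)) = 0" unfolding E1 using n1c by simp
    have cz: "Z *\<^sub>v n1 \<in> carrier_vec N1" "Ll *\<^sub>v n3 \<in> carrier_vec N1" "Mu *\<^sub>v n4 \<in> carrier_vec N1"
      using mult_mat_vec_carrier[OF Zc n1c] mult_mat_vec_carrier[OF Llc n3c] mult_mat_vec_carrier[OF Muc n4c] by auto
    have "n1 \<bullet> (Z *\<^sub>v n1 + (Ll *\<^sub>v n3 + Mu *\<^sub>v n4)) = n1 \<bullet> (Z *\<^sub>v n1) + (n1 \<bullet> (Ll *\<^sub>v n3) + n1 \<bullet> (Mu *\<^sub>v n4))"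
      using scalar_prod_add_distrib[OF n1c cz(1) add_carrier_vec[OF cz(2) cz(3)]]
        scalar_prod_add_distrib[OF n1c cz(2) cz(3)] by simp
    then show ?thesis using z0 q1 q2 by simp
  qed
  have Hm: "four_block_mat (Zmat (2*Nb) L M Lm Mm lam mu) (0\<^sub>m (2*Nb) (2*Ng))
                                   (0\<^sub>m (2*Ng) (2*Nb)) (0\<^sub>m (2*Ng) (2*Ng)) = TL"
    unfolding TL_def Z_def N1_def N2_def by simp
  have xc': "x \<in> carrier_vec (2*Nb + 2*Ng)" using xc by (simp add: N1_def N2_def)
  have quad: "x \<bullet> (TL *\<^sub>v x) = 0"
    unfolding tlx using q0 n1c n2c Zc by (simp add: x12 scalar_prod_append[of _ N1 _ N2])
  have hl: "\<forall>l<L. x \<bullet> ((2 \<cdot>\<^sub>v (Lm l *\<^sub>v v)) @\<^sub>v (- a l)) = 0"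
  proof (intro allI impI)
    fix l assume l: "l < L"
    have "x \<bullet> ((2 \<cdot>\<^sub>v (Lm l *\<^sub>v v)) @\<^sub>v (- a l)) = n1 \<bullet> (2 \<cdot>\<^sub>v (Lm l *\<^sub>v v)) + n2 \<bullet> (- a l)"
      unfolding x12 using n1c n2c Lvc[OF l] ac[OF l] by (intro scalar_prod_append) auto
    also have "\<dots> = 2 * ((Lm l *\<^sub>v v) \<bullet> n1) - a l \<bullet> n2"
      using n1c n2c Lvc[OF l] ac[OF l] comm_scalar_prod[of n1 N1 "Lm l *\<^sub>v v"] comm_scalar_prod[of n2 N2 "a l"]
      by simp
    finally show "x \<bullet> ((2 \<cdot>\<^sub>v (Lm l *\<^sub>v v)) @\<^sub>v (- a l)) = 0" using E3l[OF l] by simp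
  qed
  have hm: "\<forall>m<M. gcon Mm d f v theta m = 0 \<longrightarrow>
                 x \<bullet> ((2 \<cdot>\<^sub>v (Mm m *\<^sub>v v)) @\<^sub>v 0\<^sub>v (2*Ng)) = 0"
  proof (intro allI impI)
    fix m assume m: "m < M" and g0: "gcon Mm d f v theta m = 0"
    then have "mu $ m > 0" using strict[OF m] by simp
    with E4m[OF m] g0 have z: "(Mm m *\<^sub>v v) \<bullet> n1 = 0" by simp
    have "x \<bullet> ((2 \<cdot>\<^sub>v (Mm m *\<^sub>v v)) @\<^sub>v 0\<^sub>v (2*Ng)) = n1 \<bullet> (2 \<cdot>\<^sub>v (Mm m *\<^sub>v v)) + n2 \<bullet> 0\<^sub>v N2"
      unfolding x12 N2_def[symmetric] using n1c n2c Mvc[OF m] by (intro scalar_prod_append) auto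
    also have "\<dots> = 2 * ((Mm m *\<^sub>v v) \<bullet> n1)"
      using n1c n2c Mvc[OF m] comm_scalar_prod[of n1 N1 "Mm m *\<^sub>v v"] by simp
    finally show "x \<bullet> ((2 \<cdot>\<^sub>v (Mm m *\<^sub>v v)) @\<^sub>v 0\<^sub>v (2*Ng)) = 0" using z by simp
  qed
  have x0: "x = 0\<^sub>v (2*Nb + 2*Ng)"
  proof (rule ccontr)
    assume "x \<noteq> 0\<^sub>v (2*Nb + 2*Ng)"
    from soc[OF xc' this hl hm] quad show False unfolding Hm by simp
  qed
  have "n $ i = x $ i" unfolding nxy using i xc by (simp add: N1_def N2_def)
  then show "n $ i = 0" using x0 i by simp
qed

end
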